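(* Let $V$ be a linear subspace of $\mathbb{R}^m$ with $\dim V=l$, let $\{v_1,\dots,v_l\}$ be a basis of $V$ extended to a basis $\{v_1,\dots,v_l,\dots,v_m\}$ of $\mathbb{R}^m$. Let $\varphi:V\to\mathbb{R}^m$ be a linear map with $\varphi(x)\ne x$ for every nonzero $x\in V$, whose $m\times l$ matrix with respect to these bases (the $j$-th column giving the coordinates of $\varphi(v_j)$ in the basis $v_1,\dots,v_m$) has the form $\begin{bmatrix} J\\ *\end{bmatrix}$, where $J$ is an $l\times l$ block diagonal matrix all of whose diagonal blocks are of one single type $i_0$, with $i_0\in\{1,5,6\}$. Then there exists a linear subspace $V'\subseteq V$ with $\dim V'\ge l/3$, $\varphi(V')\cap V'=\{0\}$, and $\varphi$ injective on $V'$.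
   Context: For a positive integer $k$ and $a\in\mathbb{R}$, $J_k(a)$ is the $k\times k$ Jordan block with $a$ on the diagonal, $1$ on the superdiagonal, and $0$ elsewhere. For a positive integer $s$ and $a,b\in\mathbb{R}$ with $b\ne0$, $C_s(a,b)$ is the $2s\times 2s$ block upper-triangular matrix whose diagonal $2\times2$ blocks are all $\begin{bmatrix} a&b\\-b&a\end{bmatrix}$, whose $2\times 2$ blocks immediately above the diagonal blocks are the $2\times 2$ identity matrix, and which is zero elsewhere. Block types: Type 1 is $J_1(1)$; Type 5 is $J_k(a)$ with $k>1$ (any $a\in\mathbb{R}$); Type 6 is $C_s(a,b)$ with $b\neq 0$ (any $s\ge1$, $a\in\mathbb{R}$). *)

theory Defs
  imports "HOL-Analysis.Analysis" "Jordan_Normal_Form.Jordan_Normal_Form"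
begin

text \<open>The real 2s x 2s block C_s(a,b): diagonal 2x2 blocks [[a,b],[-b,a]],
  identity 2x2 blocks immediately above the diagonal, zero elsewhere.\<close>
definition C_block :: "nat \<Rightarrow> real \<Rightarrow> real \<Rightarrow> real mat" where
  "C_block s a b = Matrix.mat (2 * s) (2 * s) (\<lambda>(i,j).
     if i div 2 = j div 2 then
       (if i mod 2 = j mod 2 then a else if i mod 2 = 0 then b else - b)
     else if j div 2 = Suc (i div 2) \<and> i mod 2 = j mod 2 then 1 else 0)"

definition is_block_type :: "nat \<Rightarrow> real mat \<Rightarrow> bool" where
  "is_block_type t B =
     (if t = 1 then B = jordan_block 1 1
      else if t = 5 then (\<exists>k a. k > 1 \<and> B = jordan_block k a)
      else if t = 6 then (\<exists>s a b. s \<ge> 1 \<and> b \<noteq> 0 \<and> B = C_block s a b)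
      else False)"

end

theory Submission
  imports Defs
begin

definition goodS :: "real mat \<Rightarrow> nat set \<Rightarrow> (nat\<Rightarrow>nat) \<Rightarrow> (nat\<Rightarrow>real) \<Rightarrow> bool" where
 "goodS B S \<tau> \<beta> \<longleftrightarrow> dim_row B = dim_col B \<and> S \<subseteq> {..<dim_col B} \<and>
   (\<forall>j\<in>S. \<tau> j < dim_row B \<and> \<tau> j \<notin> S \<and> \<beta> j \<noteq> 0 \<and>
      (\<forall>j'\<in>S. B $$ (\<tau> j, j') = (if j = j' then \<beta> j else 0))) \<and> dim_col B \<le> 3 * card S"

lemma odd_neq[simp]: "Suc (2*j) \<noteq> 2*(x::nat)" "2*x \<noteq> Suc (2*(j::nat))"
  by presburger+

lemma good_jordan:
  assumes "k > 1"
  shows "goodS (jordan_block k a) ((\<lambda>i. 2*i+1) ` {..<k div 2}) (\<lambda>j. j - 1) (\<lambda>_. 1)"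
proof -
  have c: "card ((\<lambda>i. 2*i+1) ` {..<k div 2}) = k div 2"
    by (subst card_image) (auto simp: inj_on_def)
  show ?thesis unfolding goodS_def c using assms
    by (auto simp: jordan_block_index)
qed

lemma good_C:
  assumes "s \<ge> 1" "b \<noteq> 0"
  shows "goodS (C_block s a b) ((\<lambda>i. 2*i) ` {..<s}) (\<lambda>j. j + 1) (\<lambda>_. - b)"
proof -
  have c: "card ((\<lambda>i. 2*i) ` {..<s}) = s"
    by (subst card_image) (auto simp: inj_on_def)
  show ?thesis unfolding goodS_def c using assms
    by (auto simp: C_block_def)
qed

lemma good_diag:
  assumes "\<And>B. B \<in> set Bs \<Longrightarrow> \<exists>S \<tau> \<beta>. goodS B S \<tau> \<beta>"
  shows "\<exists>S \<tau> \<beta>. goodS (diag_block_mat Bs) S \<tau> \<beta>"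
  using assms
proof (induction Bs)
  case Nil
  show ?case by (rule exI[of _ "{}"]) (auto simp: goodS_def)
next
  case (Cons A As)
  have "\<exists>S \<tau> \<beta>. goodS (diag_block_mat As) S \<tau> \<beta>" using Cons by auto
  then obtain S2 \<tau>2 \<beta>2 where g2: "goodS (diag_block_mat As) S2 \<tau>2 \<beta>2" by blast
  have "\<exists>S \<tau> \<beta>. goodS A S \<tau> \<beta>" using Cons.prems by simp
  then obtain S1 \<tau>1 \<beta>1 where g1: "goodS A S1 \<tau>1 \<beta>1" by blast
  define D where "D = diag_block_mat As"
  define nA where "nA = dim_col A"
  define nD where "nD = dim_col D"
  have dA: "dim_row A = nA" using g1 unfolding goodS_def nA_def by auto
  have dD: "dim_row D = nD" using g2 unfolding goodS_def nD_def D_def by auto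
  have S1: "S1 \<subseteq> {..<nA}" using g1 unfolding goodS_def nA_def by auto
  have S2: "S2 \<subseteq> {..<nD}" using g2 unfolding goodS_def nD_def D_def by auto
  define S where "S = S1 \<union> (\<lambda>j. nA + j) ` S2"
  define \<tau> where "\<tau> = (\<lambda>j. if j < nA then \<tau>1 j else nA + \<tau>2 (j - nA))"
  define \<beta> where "\<beta> = (\<lambda>j. if j < nA then \<beta>1 j else \<beta>2 (j - nA))"
  have eq: "diag_block_mat (A # As) = four_block_mat A (0\<^sub>m nA nD) (0\<^sub>m nD nA) D"
    by (simp add: D_def[symmetric] Let_def dA dD nA_def nD_def)
  have fin1: "finite S1" using S1 finite_subset by blast
  have fin2: "finite S2" using S2 finite_subset by blast
  have cS: "card S = card S1 + card S2"
    unfolding S_def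
    apply (subst card_Un_disjoint)
    using fin1 fin2 S1 apply (auto simp: card_image inj_on_def)
    done
  let ?F = "four_block_mat A (0\<^sub>m nA nD) (0\<^sub>m nD nA) D"
  have h1: "dim_row ?F = dim_col ?F" by (simp add: dA dD nA_def nD_def)
  have h2: "S \<subseteq> {..<dim_col ?F}"
      using S1 S2 by (auto simp: S_def nA_def nD_def)
  have h3: "dim_col ?F \<le> 3 * card S"
      using g1 g2 unfolding cS goodS_def nA_def nD_def D_def by simp
  have h4: "\<tau> j < dim_row ?F \<and> \<tau> j \<notin> S \<and> \<beta> j \<noteq> 0 \<and>
          (\<forall>j'\<in>S. ?F $$ (\<tau> j, j') = (if j = j' then \<beta> j else 0))" if j: "j \<in> S" for j
    proof (cases "j < nA")
      case True
      then have jS1: "j \<in> S1" using j S2 by (auto simp: S_def)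
      have p: "\<tau>1 j < nA" "\<tau>1 j \<notin> S1" "\<beta>1 j \<noteq> 0"
        "\<And>j'. j' \<in> S1 \<Longrightarrow> A $$ (\<tau>1 j, j') = (if j = j' then \<beta>1 j else 0)"
        using g1 jS1 unfolding goodS_def nA_def by auto
      show ?thesis using True p S1 S2 dA dD
        by (auto simp: \<tau>_def \<beta>_def S_def nA_def nD_def)
    next
      case False
      then obtain j2 where jj: "j = nA + j2" "j2 \<in> S2" using j S1 by (auto simp: S_def)
      have p: "\<tau>2 j2 < nD" "\<tau>2 j2 \<notin> S2" "\<beta>2 j2 \<noteq> 0"
        "\<And>j'. j' \<in> S2 \<Longrightarrow> D $$ (\<tau>2 j2, j') = (if j2 = j' then \<beta>2 j2 else 0)"
        using g2 jj unfolding goodS_def nD_def D_def by auto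
      show ?thesis using jj p S1 S2 dA dD
        by (auto simp: \<tau>_def \<beta>_def S_def nA_def[symmetric] nD_def)
    qed
  have "goodS (diag_block_mat (A # As)) S \<tau> \<beta>"
    unfolding eq goodS_def using h1 h2 h3 h4 by blast
  then show ?case by blast
qed

lemma diag_id:
  assumes "\<And>B. B \<in> set Bs \<Longrightarrow> B = jordan_block 1 (1::real)"
  shows "diag_block_mat Bs = 1\<^sub>m (length Bs)"
  using assms
proof (induction Bs)
  case Nil
  then show ?case by auto
next
  case (Cons A As)
  then have A0: "A = jordan_block 1 1" by auto
  have A: "A = 1\<^sub>m 1" unfolding A0 by (rule eq_matI) auto
  have IH: "diag_block_mat As = 1\<^sub>m (length As)" using Cons by auto
  show ?case
    by (rule eq_matI) (auto simp: A IH Let_def)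
qed


lemma span_idx:
  fixes v :: "nat \<Rightarrow> 'a::real_vector"
  assumes "finite S" "inj_on v S" "x \<in> span (v ` S)"
  shows "\<exists>c. x = (\<Sum>j\<in>S. c j *\<^sub>R v j)"
proof -
  from assms(3) obtain u where u: "x = (\<Sum>w\<in>v ` S. u w *\<^sub>R w)"
    using span_finite[of "v ` S"] assms(1) by auto
  have "(\<Sum>w\<in>v ` S. u w *\<^sub>R w) = (\<Sum>j\<in>S. u (v j) *\<^sub>R v j)"
    by (subst sum.reindex[OF assms(2)]) simp
  then show ?thesis using u by (intro exI[where x="\<lambda>j. u (v j)"]) simp
qed

lemma coords_unique:
  fixes v :: "nat \<Rightarrow> 'a::real_vector"
  assumes ind: "independent (v ` {..<n})" and inj: "inj_on v {..<n}"
    and eq: "(\<Sum>i<n. a i *\<^sub>R v i) = (\<Sum>i<n. b i *\<^sub>R v i)" and i: "i < n"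
  shows "a i = b i"
proof (rule ccontr)
  assume ne: "a i \<noteq> b i"
  define u where "u w = a (inv_into {..<n} v w) - b (inv_into {..<n} v w)" for w
  have "(\<Sum>w\<in>v ` {..<n}. u w *\<^sub>R w) = (\<Sum>j<n. u (v j) *\<^sub>R v j)"
    by (subst sum.reindex[OF inj]) simp
  also have "\<dots> = (\<Sum>j<n. (a j - b j) *\<^sub>R v j)"
    by (rule sum.cong) (auto simp: u_def inv_into_f_f[OF inj])
  also have "\<dots> = 0" using eq by (simp add: scaleR_diff_left sum_subtractf)
  finally have z: "(\<Sum>w\<in>v ` {..<n}. u w *\<^sub>R w) = 0" .
  have "u (v i) \<noteq> 0" using ne i by (simp add: u_def inv_into_f_f[OF inj])
  then have "dependent (v ` {..<n})"
    using z i by (subst dependent_finite) auto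
  then show False using ind by simp
qed

lemma phi_expand:
  fixes v :: "nat \<Rightarrow> real^'m"
  assumes lin: "linear \<phi>" and fin: "finite S" and S: "S \<subseteq> {..<l}"
    and M_cols: "\<And>j. j < l \<Longrightarrow> \<phi> (v j) = (\<Sum>i<CARD('m). M $$ (i, j) *\<^sub>R v i)"
  shows "\<phi> (\<Sum>j\<in>S. c j *\<^sub>R v j) = (\<Sum>i<CARD('m). (\<Sum>j\<in>S. c j * M $$ (i, j)) *\<^sub>R v i)"
proof -
  have "\<phi> (\<Sum>j\<in>S. c j *\<^sub>R v j) = (\<Sum>j\<in>S. c j *\<^sub>R \<phi> (v j))"
    by (simp add: linear_sum[OF lin] linear_scale[OF lin])
  also have "\<dots> = (\<Sum>j\<in>S. c j *\<^sub>R (\<Sum>i<CARD('m). M $$ (i, j) *\<^sub>R v i))"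
    by (rule sum.cong) (use S M_cols in auto)
  also have "\<dots> = (\<Sum>j\<in>S. \<Sum>i<CARD('m). (c j * M $$ (i, j)) *\<^sub>R v i)"
    by (simp add: scaleR_sum_right)
  also have "\<dots> = (\<Sum>i<CARD('m). \<Sum>j\<in>S. (c j * M $$ (i, j)) *\<^sub>R v i)"
    by (rule sum.swap)
  also have "\<dots> = (\<Sum>i<CARD('m). (\<Sum>j\<in>S. c j * M $$ (i, j)) *\<^sub>R v i)"
    by (simp add: scaleR_sum_left)
  finally show ?thesis .
qed

lemma in_span_coords:
  fixes v :: "nat \<Rightarrow> 'a::real_vector"
  assumes "S \<subseteq> {..<n}"
  shows "(\<Sum>j\<in>S. d j *\<^sub>R v j) = (\<Sum>i<n. (if i \<in> S then d i else 0) *\<^sub>R v i)"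
proof -
  have "(\<Sum>i<n. (if i \<in> S then d i else 0) *\<^sub>R v i) = (\<Sum>i<n. if i \<in> S then d i *\<^sub>R v i else 0)"
    by (rule sum.cong) auto
  also have "\<dots> = (\<Sum>i\<in>{..<n} \<inter> S. d i *\<^sub>R v i)"
    by (rule sum.inter_restrict[symmetric]) simp
  also have "{..<n} \<inter> S = S" using assms by auto
  finally show ?thesis by simp
qed

theorem lemma3p3:
  fixes v :: "nat \<Rightarrow> real^'m"
    and l :: nat
    and V :: "(real^'m) set"
    and \<phi> :: "real^'m \<Rightarrow> real^'m"
    and M :: "real mat"
    and Bs :: "real mat list"
    and i0 :: nat
  assumes basis_indep: "independent (v ` {..<CARD('m)})"
    and basis_inj: "inj_on v {..<CARD('m)}"
    and basis_span: "span (v ` {..<CARD('m)}) = UNIV"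
    and l_le: "l \<le> CARD('m)"
    and V_def: "V = span (v ` {..<l})"
    and lin: "linear \<phi>"
    and no_fix: "\<And>x. x \<in> V \<Longrightarrow> x \<noteq> 0 \<Longrightarrow> \<phi> x \<noteq> x"
    and M_dim: "M \<in> carrier_mat CARD('m) l"
    and M_cols: "\<And>j. j < l \<Longrightarrow> \<phi> (v j) = (\<Sum>i<CARD('m). M $$ (i, j) *\<^sub>R v i)"
    and J_dim: "diag_block_mat Bs \<in> carrier_mat l l"
    and M_top: "\<And>i j. i < l \<Longrightarrow> j < l \<Longrightarrow> M $$ (i, j) = diag_block_mat Bs $$ (i, j)"
    and i0: "i0 \<in> {1, 5, 6}"
    and types: "\<And>B. B \<in> set Bs \<Longrightarrow> is_block_type i0 B"
  shows "\<exists>V'. subspace V' \<and> V' \<subseteq> V \<and> real (dim V') \<ge> real l / 3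
              \<and> \<phi> ` V' \<inter> V' = {0} \<and> inj_on \<phi> V'"
proof -
  let ?n = "CARD('m)"
  have general: "\<exists>V'. subspace V' \<and> V' \<subseteq> V \<and> real (dim V') \<ge> real l / 3
              \<and> \<phi> ` V' \<inter> V' = {0} \<and> inj_on \<phi> V'"
    if SV: "S \<subseteq> {..<l}" and cardS: "real l \<le> 3 * real (card S)"
      and key: "\<And>x. x \<in> span (v ` S) \<Longrightarrow> \<phi> x \<in> span (v ` S) \<Longrightarrow> x = 0" for S
  proof (intro exI conjI)
    let ?V' = "span (v ` S)"
    show "subspace ?V'" by simp
    show "?V' \<subseteq> V" unfolding V_def by (rule span_mono) (use SV in auto)
    have injS: "inj_on v S" by (rule inj_on_subset[OF basis_inj]) (use SV l_le in auto)
    have "independent (v ` S)"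
      by (rule independent_mono[OF basis_indep]) (use SV l_le in auto)
    then have "dim ?V' = card S"
      by (simp add: dim_span dim_eq_card_independent card_image[OF injS])
    then show "real (dim ?V') \<ge> real l / 3" using cardS by simp
    have z: "\<phi> 0 = 0" using lin by (simp add: linear_0)
    show "\<phi> ` ?V' \<inter> ?V' = {0}"
    proof
      show "\<phi> ` ?V' \<inter> ?V' \<subseteq> {0}" using key z by auto
      show "{0} \<subseteq> \<phi> ` ?V' \<inter> ?V'" using z span_zero by force
    qed
    show "inj_on \<phi> ?V'"
    proof (rule inj_onI)
      fix x y assume xy: "x \<in> ?V'" "y \<in> ?V'" "\<phi> x = \<phi> y"
      have "\<phi> (x - y) = 0" using xy(3) by (simp add: linear_diff[OF lin])
      moreover have "x - y \<in> ?V'" using xy by (simp add: span_diff)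
      ultimately have "x - y = 0" using key span_zero by metis
      then show "x = y" by simp
    qed
  qed
  show ?thesis
  proof (cases "i0 = 1")
    case True
    then have "\<And>B. B \<in> set Bs \<Longrightarrow> B = jordan_block 1 1"
      using types unfolding is_block_type_def by auto
    then have D: "diag_block_mat Bs = 1\<^sub>m (length Bs)" by (rule diag_id)
    then have len: "length Bs = l" using J_dim by auto
    have Mid: "M $$ (i, j) = (if i = j then 1 else 0)" if "i < l" "j < l" for i j
      using M_top[OF that] that D len by simp
    show ?thesis
    proof (rule general[of "{..<l}"])
      fix x assume x: "x \<in> span (v ` {..<l})" and px: "\<phi> x \<in> span (v ` {..<l})"
      have injS: "inj_on v {..<l}" by (rule inj_on_subset[OF basis_inj]) (use l_le in auto)
      obtain c where c: "x = (\<Sum>j<l. c j *\<^sub>R v j)" using span_idx[OF _ injS x] by auto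
      obtain d where d: "\<phi> x = (\<Sum>j<l. d j *\<^sub>R v j)" using span_idx[OF _ injS px] by auto
      have e1: "\<phi> x = (\<Sum>i<?n. (\<Sum>j<l. c j * M $$ (i, j)) *\<^sub>R v i)"
        unfolding c by (rule phi_expand[OF lin]) (use M_cols in auto)
      have e2: "\<phi> x = (\<Sum>i<?n. (if i \<in> {..<l} then d i else 0) *\<^sub>R v i)"
        unfolding d by (rule in_span_coords) (use l_le in auto)
      have cd: "c i = d i" if i: "i < l" for i
      proof -
        have "(\<Sum>j<l. c j * M $$ (i, j)) = (if i \<in> {..<l} then d i else 0)"
          by (rule coords_unique[OF basis_indep basis_inj, of _ _ i]) (use e1 e2 i l_le in auto)
        moreover have "(\<Sum>j<l. c j * M $$ (i, j)) = (\<Sum>j<l. if j = i then c i else 0)"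
          by (rule sum.cong) (use Mid i in auto)
        ultimately show ?thesis using i by simp
      qed
      have eqdc: "(\<Sum>j<l. d j *\<^sub>R v j) = (\<Sum>j<l. c j *\<^sub>R v j)" by (rule sum.cong) (use cd in auto)
      have "\<phi> x = x" by (simp only: d eqdc c[symmetric])
      then show "x = 0" using no_fix x V_def by auto
    qed (auto)
  next
    case False
    have "\<And>B. B \<in> set Bs \<Longrightarrow> \<exists>S \<tau> \<beta>. goodS B S \<tau> \<beta>"
    proof -
      fix B assume "B \<in> set Bs"
      then have t: "is_block_type i0 B" by (rule types)
      show "\<exists>S \<tau> \<beta>. goodS B S \<tau> \<beta>"
      proof (cases "i0 = 5")
        case True
        then obtain k a where "k > 1" "B = jordan_block k a" using t unfolding is_block_type_def by auto
        then show ?thesis using good_jordan by blast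
      next
        case False2: False
        then have "i0 = 6" using i0 False by auto
        then obtain s a b where "s \<ge> 1" "b \<noteq> 0" "B = C_block s a b"
          using t unfolding is_block_type_def by auto
        then show ?thesis using good_C by blast
      qed
    qed
    then obtain S \<tau> \<beta> where g: "goodS (diag_block_mat Bs) S \<tau> \<beta>" using good_diag by blast
    have dl: "dim_col (diag_block_mat Bs) = l" "dim_row (diag_block_mat Bs) = l" using J_dim by auto
    have SV: "S \<subseteq> {..<l}" using g dl unfolding goodS_def by auto
    have cardS: "l \<le> 3 * card S" using g dl unfolding goodS_def by auto
    have tau: "\<tau> j < l" "\<tau> j \<notin> S" "\<beta> j \<noteq> 0"
      "\<And>j'. j' \<in> S \<Longrightarrow> M $$ (\<tau> j, j') = (if j = j' then \<beta> j else 0)" if "j \<in> S" for j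
      using g dl that SV M_top unfolding goodS_def by (auto simp: subset_iff)
    show ?thesis
    proof (rule general[OF SV])
      show "real l \<le> 3 * real (card S)" using cardS by linarith
      fix x assume x: "x \<in> span (v ` S)" and px: "\<phi> x \<in> span (v ` S)"
      have fin: "finite S" using SV finite_subset by blast
      have injS: "inj_on v S" by (rule inj_on_subset[OF basis_inj]) (use SV l_le in auto)
      obtain c where c: "x = (\<Sum>j\<in>S. c j *\<^sub>R v j)" using span_idx[OF fin injS x] by auto
      obtain d where d: "\<phi> x = (\<Sum>j\<in>S. d j *\<^sub>R v j)" using span_idx[OF fin injS px] by auto
      have e1: "\<phi> x = (\<Sum>i<?n. (\<Sum>j\<in>S. c j * M $$ (i, j)) *\<^sub>R v i)"
        unfolding c by (rule phi_expand[OF lin fin SV M_cols])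
      have e2: "\<phi> x = (\<Sum>i<?n. (if i \<in> S then d i else 0) *\<^sub>R v i)"
        unfolding d by (rule in_span_coords) (use SV l_le in auto)
      have c0: "c j = 0" if j: "j \<in> S" for j
      proof -
        have "(\<Sum>j'\<in>S. c j' * M $$ (\<tau> j, j')) = (if \<tau> j \<in> S then d (\<tau> j) else 0)"
          by (rule coords_unique[OF basis_indep basis_inj, of _ _ "\<tau> j"]) (use e1 e2 tau[OF j] l_le in auto)
        moreover have "(\<Sum>j'\<in>S. c j' * M $$ (\<tau> j, j')) = (\<Sum>j'\<in>S. if j' = j then c j * \<beta> j else 0)"
          by (rule sum.cong) (use tau[OF j] in auto)
        ultimately show ?thesis using j fin tau[OF j] by simp
      qed
      show "x = 0" unfolding c using c0 by simp
    qed
  qed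
qed

end
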